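(* In COT, every indexed class is bounded: for every class $X$ and ordinal $x$, if $\iota(X)=x$ then $\mathrm{bnd}(X)$.
   Context: COT (Class Ordering Theory) is the following theory in two-sorted first-order logic with equality. Lower-case variables range over the first sort ("ordinals"), upper-case variables over the second sort ("classes"). The non-logical symbols are: a binary relation $\varepsilon$ holding only from first-sort to second-sort objects (class membership), a binary relation $\prec$ holding only between classes, and a partial unary function $\iota$ from classes to ordinals. Write $X\equiv Y$ for $\forall z(z\ \varepsilon\ X\leftrightarrow z\ \varepsilon\ Y)$. The notation $\{x\mid\phi\}$ denotes any class whose members are exactly the $x$ satisfying $\phi$; a formula $\psi(\{x\mid\phi\})$ abbreviates $\forall X[\forall x(x\ \varepsilon\ X\leftrightarrow\phi)\to\psi(X)]$. Axioms: (1) Comprehension: $\exists X\forall x(x\ \varepsilon\ X\leftrightarrow\phi)$ for every formula $\phi$ in which $X$ is not free. (2) Transitivity: $X\prec Y\prec Z\to X\prec Z$; Co-connectedness: $X\not\equiv Y\leftrightarrow(X\prec Y\lor Y\prec X)$; Well-foundedness: for every formula $\phi$, $\phi(X)\to\exists M(\phi(M)\land\forall Y(\phi(Y)\to\neg Y\prec M))$. Define $x<y\iff\{x\}\prec\{y\}$, and $\lim X$ = the $<$-least $l$ such that $x<l$ for all $x\ \varepsilon\ X$ (when it exists); $\mathrm{bnd}(X)$ means $\lim X$ exists. (3) Respective: if $\lim X\le y$ and $y\ \varepsilon\ Y$ then $X\prec Y$. (4) Indexing: for every $X$ with $\mathrm{bnd}(X)$, $\iota(X)$ is defined and $\iota(X)=\lim\{\iota(Y)\mid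 Y\prec X\}$. (5) Infinity: $\exists l(\exists k\,(k<l)\land\forall x<l\,\exists y\,(x<y<l))$. (6) Boundedness: if $\mathrm{bnd}(X)$ and $X\sim Y$ (the members of $X$ and of $Y$ are equinumerous via a class bijection in the usual sense) then $\mathrm{bnd}(Y)$.
   Formalization: Axiom (4) is a two-way equality for every class X, bounded or not: $\iota(X)=x$ exactly when $\lim\{\iota(Y)\mid Y\prec X\}$ exists and equals x, so $\iota(X)$ is undefined when that limit does not exist. Apart from conventions, each condition added here is assumed in the paper as well or is needed for the statement above to hold. *)

theory Defs
  imports Main
begin

text \<open>Sort of ordinals: type 'o; sort of classes: type 'c.
  eps :: 'o => 'c => bool is class membership, prec is the class ordering,
  iota :: 'c => 'o option is the partial indexing function (None = undefined).\<close>

definition ceq :: "('o \<Rightarrow> 'c \<Rightarrow> bool) \<Rightarrow> 'c \<Rightarrow> 'c \<Rightarrow> bool" where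
  "ceq eps X Y \<longleftrightarrow> (\<forall>z. eps z X \<longleftrightarrow> eps z Y)"

text \<open>x < y iff {x} prec {y}, with the class-abstraction abbreviation convention.\<close>
definition olt :: "('o \<Rightarrow> 'c \<Rightarrow> bool) \<Rightarrow> ('c \<Rightarrow> 'c \<Rightarrow> bool) \<Rightarrow> 'o \<Rightarrow> 'o \<Rightarrow> bool" where
  "olt eps prec x y \<longleftrightarrow>
     (\<forall>X Y. (\<forall>z. eps z X \<longleftrightarrow> z = x) \<longrightarrow> (\<forall>z. eps z Y \<longleftrightarrow> z = y) \<longrightarrow> prec X Y)"

definition is_lim :: "('o \<Rightarrow> 'c \<Rightarrow> bool) \<Rightarrow> ('c \<Rightarrow> 'c \<Rightarrow> bool) \<Rightarrow> 'c \<Rightarrow> 'o \<Rightarrow> bool" where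
  "is_lim eps prec X l \<longleftrightarrow>
     (\<forall>x. eps x X \<longrightarrow> olt eps prec x l) \<and>
     (\<forall>l'. (\<forall>x. eps x X \<longrightarrow> olt eps prec x l') \<longrightarrow> (olt eps prec l l' \<or> l = l'))"

definition bnd :: "('o \<Rightarrow> 'c \<Rightarrow> bool) \<Rightarrow> ('c \<Rightarrow> 'c \<Rightarrow> bool) \<Rightarrow> 'c \<Rightarrow> bool" where
  "bnd eps prec X \<longleftrightarrow> (\<exists>l. is_lim eps prec X l)"

text \<open>lim X \<le> y (false if lim X does not exist).\<close>
definition lim_le :: "('o \<Rightarrow> 'c \<Rightarrow> bool) \<Rightarrow> ('c \<Rightarrow> 'c \<Rightarrow> bool) \<Rightarrow> 'c \<Rightarrow> 'o \<Rightarrow> bool" where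
  "lim_le eps prec X y \<longleftrightarrow> (\<exists>l. is_lim eps prec X l \<and> (olt eps prec l y \<or> l = y))"

definition equinum :: "('o \<Rightarrow> 'c \<Rightarrow> bool) \<Rightarrow> 'c \<Rightarrow> 'c \<Rightarrow> bool" where
  "equinum eps X Y \<longleftrightarrow> (\<exists>f. bij_betw f {x. eps x X} {y. eps y Y})"

definition index_class :: "('o \<Rightarrow> 'c \<Rightarrow> bool) \<Rightarrow> ('c \<Rightarrow> 'c \<Rightarrow> bool) \<Rightarrow> ('c \<Rightarrow> 'o option) \<Rightarrow> 'c \<Rightarrow> 'c \<Rightarrow> bool" where
  "index_class eps prec iota X C \<longleftrightarrow> (\<forall>z. eps z C \<longleftrightarrow> (\<exists>Y. prec Y X \<and> iota Y = Some z))"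

definition COT :: "('o \<Rightarrow> 'c \<Rightarrow> bool) \<Rightarrow> ('c \<Rightarrow> 'c \<Rightarrow> bool) \<Rightarrow> ('c \<Rightarrow> 'o option) \<Rightarrow> bool" where
  "COT eps prec iota \<longleftrightarrow>
     \<comment> \<open>(1) Comprehension\<close>
     (\<forall>P :: 'o \<Rightarrow> bool. \<exists>X. \<forall>x. eps x X \<longleftrightarrow> P x) \<and>
     \<comment> \<open>(2) Transitivity, co-connectedness, well-foundedness\<close>
     (\<forall>X Y Z. prec X Y \<longrightarrow> prec Y Z \<longrightarrow> prec X Z) \<and>
     (\<forall>X Y. \<not> ceq eps X Y \<longleftrightarrow> (prec X Y \<or> prec Y X)) \<and>
     (\<forall>(P :: 'c \<Rightarrow> bool) X. P X \<longrightarrow> (\<exists>M. P M \<and> (\<forall>Y. P Y \<longrightarrow> \<not> prec Y M))) \<and>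
     \<comment> \<open>(3) Respective\<close>
     (\<forall>X Y y. lim_le eps prec X y \<longrightarrow> eps y Y \<longrightarrow> prec X Y) \<and>
     \<comment> \<open>(4) Indexing: iota(X) = lim {iota(Y) | Y prec X} (Kleene equality), defined on bounded X\<close>
     (\<forall>X. bnd eps prec X \<longrightarrow> iota X \<noteq> None) \<and>
     (\<forall>X x. iota X = Some x \<longleftrightarrow> (\<forall>C. index_class eps prec iota X C \<longrightarrow> is_lim eps prec C x)) \<and>
     \<comment> \<open>(5) Infinity\<close>
     (\<exists>l. (\<exists>k. olt eps prec k l) \<and> (\<forall>x. olt eps prec x l \<longrightarrow> (\<exists>y. olt eps prec x y \<and> olt eps prec y l))) \<and>
     \<comment> \<open>(6) Boundedness\<close>
     (\<forall>X Y. bnd eps prec X \<longrightarrow> equinum eps X Y \<longrightarrow> bnd eps prec Y)"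

end

theory Submission
  imports Defs
begin

context
  fixes eps :: "'o \<Rightarrow> 'c \<Rightarrow> bool" and prec :: "'c \<Rightarrow> 'c \<Rightarrow> bool"
    and iota :: "'c \<Rightarrow> 'o option"
  assumes C: "COT eps prec iota"
begin

lemma compr: "\<exists>X. \<forall>x. eps x X \<longleftrightarrow> P x"
  using C[unfolded COT_def, THEN conjunct1] by blast
lemma ptrans: "prec X Y \<Longrightarrow> prec Y Z \<Longrightarrow> prec X Z"
  using C[unfolded COT_def, THEN conjunct2, THEN conjunct1] by blast
lemma conn: "\<not> ceq eps X Y \<longleftrightarrow> (prec X Y \<or> prec Y X)"
  using C[unfolded COT_def, THEN conjunct2, THEN conjunct2, THEN conjunct1] by blast
lemma cwf: "Q X \<Longrightarrow> \<exists>M. Q M \<and> (\<forall>Y. Q Y \<longrightarrow> \<not> prec Y M)"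
  using C[unfolded COT_def, THEN conjunct2, THEN conjunct2, THEN conjunct2, THEN conjunct1] by blast
lemma resp: "lim_le eps prec X y \<Longrightarrow> eps y Y \<Longrightarrow> prec X Y"
  using C[unfolded COT_def, THEN conjunct2, THEN conjunct2, THEN conjunct2, THEN conjunct2, THEN conjunct1] by blast
lemma defd: "bnd eps prec X \<Longrightarrow> iota X \<noteq> None"
  using C[unfolded COT_def, THEN conjunct2, THEN conjunct2, THEN conjunct2, THEN conjunct2, THEN conjunct2, THEN conjunct1] by blast
lemma iota_ax: "iota X = Some x \<longleftrightarrow> (\<forall>C. index_class eps prec iota X C \<longrightarrow> is_lim eps prec C x)"
  using C[unfolded COT_def, THEN conjunct2, THEN conjunct2, THEN conjunct2, THEN conjunct2, THEN conjunct2, THEN conjunct2, THEN conjunct1] by blast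

lemma pirr: "\<not> prec X X"
  using conn[of X X] by (auto simp: ceq_def)

lemma resp_l: "ceq eps X X' \<Longrightarrow> prec X Y \<Longrightarrow> prec X' Y"
proof -
  assume e: "ceq eps X X'" and p: "prec X Y"
  have "\<not> ceq eps X Y" using conn[of X Y] p by simp
  hence "\<not> ceq eps X' Y" using e by (auto simp: ceq_def)
  hence "prec X' Y \<or> prec Y X'" using conn[of X' Y] by simp
  moreover have "\<not> prec Y X'"
  proof
    assume "prec Y X'"
    hence "prec X X'" using ptrans[OF p] by simp
    thus False using conn[of X X'] e by simp
  qed
  ultimately show ?thesis by blast
qed

lemma resp_r: "ceq eps Y Y' \<Longrightarrow> prec X Y \<Longrightarrow> prec X Y'"
proof -
  assume e: "ceq eps Y Y'" and p: "prec X Y"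
  have "\<not> ceq eps X Y" using conn[of X Y] p by simp
  hence "\<not> ceq eps X Y'" using e by (auto simp: ceq_def)
  hence "prec X Y' \<or> prec Y' X" using conn[of X Y'] by simp
  moreover have "\<not> prec Y' X"
  proof
    assume "prec Y' X"
    hence "prec Y' Y" using ptrans[OF _ p] by simp
    thus False using conn[of Y Y'] e by simp
  qed
  ultimately show ?thesis by blast
qed

lemma sing: "\<exists>S. \<forall>z. eps z S \<longleftrightarrow> z = a"
  using compr[of "\<lambda>z. z = a"] by simp

lemma olt_iff:
  assumes S: "\<forall>z. eps z S \<longleftrightarrow> z = a" and T: "\<forall>z. eps z T \<longleftrightarrow> z = b"
  shows "olt eps prec a b \<longleftrightarrow> prec S T"
proof
  assume "olt eps prec a b" thus "prec S T" using S T unfolding olt_def by blast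
next
  assume p: "prec S T"
  show "olt eps prec a b" unfolding olt_def
  proof (intro allI impI)
    fix X Y assume X: "\<forall>z. eps z X \<longleftrightarrow> z = a" and Y: "\<forall>z. eps z Y \<longleftrightarrow> z = b"
    have "ceq eps S X" "ceq eps T Y" using S T X Y by (auto simp: ceq_def)
    thus "prec X Y" using resp_l[OF _ p] resp_r by blast
  qed
qed

lemma olt_irr: "\<not> olt eps prec a a"
  using sing[of a] olt_iff pirr by blast

lemma olt_trans: "olt eps prec a b \<Longrightarrow> olt eps prec b c \<Longrightarrow> olt eps prec a c"
proof -
  assume 1: "olt eps prec a b" and 2: "olt eps prec b c"
  obtain S T U where S: "\<forall>z. eps z S \<longleftrightarrow> z = a" and T: "\<forall>z. eps z T \<longleftrightarrow> z = b"
     and U: "\<forall>z. eps z U \<longleftrightarrow> z = c" using sing by metis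
  show ?thesis using olt_iff[OF S T] olt_iff[OF T U] olt_iff[OF S U] 1 2 ptrans[of S T U] by blast
qed

lemma olt_lin: "a \<noteq> b \<Longrightarrow> olt eps prec a b \<or> olt eps prec b a"
proof -
  assume ne: "a \<noteq> b"
  obtain S T where S: "\<forall>z. eps z S \<longleftrightarrow> z = a" and T: "\<forall>z. eps z T \<longleftrightarrow> z = b"
    using sing by metis
  have "\<not> ceq eps S T" using S T ne by (auto simp: ceq_def)
  thus ?thesis using conn[of S T] olt_iff[OF S T] olt_iff[OF T S] by blast
qed

lemma olt_wf: "Q a \<Longrightarrow> \<exists>m. Q m \<and> (\<forall>w. Q w \<longrightarrow> \<not> olt eps prec w m)"
proof -
  assume q: "Q a"
  obtain S where S: "\<forall>z. eps z S \<longleftrightarrow> z = a" using sing by metis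
  let ?P = "\<lambda>M. \<exists>z. Q z \<and> (\<forall>w. eps w M \<longleftrightarrow> w = z)"
  have "?P S" using q S by blast
  then obtain M where M: "?P M" and min: "\<forall>Y. ?P Y \<longrightarrow> \<not> prec Y M" using cwf[of ?P S] by blast
  obtain m where m: "Q m" "\<forall>w. eps w M \<longleftrightarrow> w = m" using M by blast
  have "\<forall>w. Q w \<longrightarrow> \<not> olt eps prec w m"
  proof (intro allI impI)
    fix w assume "Q w"
    obtain W where W: "\<forall>z. eps z W \<longleftrightarrow> z = w" using sing by metis
    have "\<not> prec W M" using min W \<open>Q w\<close> by blast
    thus "\<not> olt eps prec w m" using olt_iff[OF W m(2)] by blast
  qed
  thus ?thesis using m by blast
qed

lemma lim_E: "\<forall>y. eps y E \<longleftrightarrow> olt eps prec y z \<Longrightarrow> is_lim eps prec E z"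
  unfolding is_lim_def using olt_lin olt_irr olt_trans by metis

lemma bnd_of_ub: "\<forall>y. eps y X \<longrightarrow> olt eps prec y u \<Longrightarrow> bnd eps prec X"
proof -
  assume "\<forall>y. eps y X \<longrightarrow> olt eps prec y u"
  then obtain l where l: "\<forall>y. eps y X \<longrightarrow> olt eps prec y l"
    and mn: "\<forall>w. (\<forall>y. eps y X \<longrightarrow> olt eps prec y w) \<longrightarrow> \<not> olt eps prec w l"
    using olt_wf[of "\<lambda>l. \<forall>y. eps y X \<longrightarrow> olt eps prec y l" u] by blast
  have "is_lim eps prec X l" unfolding is_lim_def using l mn olt_lin by blast
  thus ?thesis unfolding bnd_def by blast
qed

lemma iota_mono:
  assumes p: "prec Y Z" and y: "iota Y = Some a" and z: "iota Z = Some b"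
  shows "olt eps prec a b"
proof -
  obtain D where D: "\<forall>w. eps w D \<longleftrightarrow> (\<exists>V. prec V Z \<and> iota V = Some w)"
    using compr[of "\<lambda>w. \<exists>V. prec V Z \<and> iota V = Some w"] by blast
  have "index_class eps prec iota Z D" using D unfolding index_class_def by blast
  hence "is_lim eps prec D b" using iota_ax z by blast
  moreover have "eps a D" using D p y by blast
  ultimately show ?thesis unfolding is_lim_def by blast
qed

end

theorem propositionI:
  fixes eps :: "'o \<Rightarrow> 'c \<Rightarrow> bool" and prec :: "'c \<Rightarrow> 'c \<Rightarrow> bool"
    and iota :: "'c \<Rightarrow> 'o option"
  assumes "COT eps prec iota"
  shows "\<forall>X x. iota X = Some x \<longrightarrow> bnd eps prec X"
proof (intro allI impI)
  note C = assms
  fix X x assume ix: "iota X = Some x"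
  show "bnd eps prec X"
  proof (rule ccontr)
    assume nb: "\<not> bnd eps prec X"
    define E where "E = (\<lambda>z. SOME S. \<forall>y. eps y S \<longleftrightarrow> olt eps prec y z)"
    have E: "\<forall>y. eps y (E z) \<longleftrightarrow> olt eps prec y z" for z
      unfolding E_def using someI_ex[OF compr[OF C, of "\<lambda>y. olt eps prec y z"]] by blast
    have limE: "is_lim eps prec (E z) z" for z using lim_E[OF C E] .
    have bE: "bnd eps prec (E z)" for z using limE unfolding bnd_def by blast
    define g where "g = (\<lambda>z. the (iota (E z)))"
    have gE: "iota (E z) = Some (g z)" for z using defd[OF C bE] unfolding g_def by auto
    have Emono: "prec (E w) (E z)" if "olt eps prec w z" for w z
    proof -
      have "lim_le eps prec (E w) w" unfolding lim_le_def using limE by blast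
      thus ?thesis using resp[OF C] E that by blast
    qed
    have nodesc: "\<not> olt eps prec (g z) z" for z
    proof
      assume "olt eps prec (g z) z"
      then obtain m where m: "olt eps prec (g m) m"
        and mn: "\<forall>w. olt eps prec (g w) w \<longrightarrow> \<not> olt eps prec w m"
        using olt_wf[OF C, of "\<lambda>z. olt eps prec (g z) z" z] by blast
      have "olt eps prec (g (g m)) (g m)"
        using iota_mono[OF C Emono[OF m] gE gE] .
      thus False using mn m by blast
    qed
    have "\<exists>y. eps y X \<and> \<not> olt eps prec y x"
      using nb bnd_of_ub[OF C, of X x] by blast
    then obtain y where y: "eps y X" "\<not> olt eps prec y x" by blast
    have "lim_le eps prec (E x) y" unfolding lim_le_def using limE olt_lin[OF C] y(2) by blast
    hence "prec (E x) X" using resp[OF C] y(1) by blast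
    hence "olt eps prec (g x) x" using iota_mono[OF C _ gE ix] by blast
    thus False using nodesc by blast
  qed
qed

end
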